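(* For every $m\ge1$ there is a market with $m$ items and $m+1$ unit-demand buyers whose minimum Walrasian revenue is $m$, and for which there exist a selling order of the items and a subgame perfect equilibrium of the sequential first-price auction with revenue $1$.
   Context: Unit demand: buyer $i$ has values $v_{i,j}\ge0$ and $v_i(S)=\max_{j\in S}v_{i,j}$, $v_i(\emptyset)=0$; utility is quasi-linear. A Walrasian equilibrium is a price vector $p\ge0$ and an allocation of every item to a buyer such that each buyer's bundle maximizes $v_i(T)-\sum_{j\in T}p_j$ over all bundles $T$; a minimum Walrasian equilibrium has prices coordinatewise at most those of every Walrasian equilibrium, and the minimum Walrasian revenue is the sum of its prices. In a sequential first-price auction the items are sold one at a time in the given order, each by a sealed-bid first-price auction without reserve price (highest bidder wins, ties broken by a seller-chosen rule, winner pays his bid). Full information. A subgame perfect equilibrium is a (pure) strategy profile that is a Nash equilibrium in every subgame; its revenue is the total payment on the equilibrium path. *)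

theory Defs
  imports Complex_Main
begin

(* Buyers are 0..<n, items are 0..<m, v i j is buyer i's value for item j. *)

definition unit_val :: "(nat \<Rightarrow> nat \<Rightarrow> real) \<Rightarrow> nat \<Rightarrow> nat set \<Rightarrow> real" where
  "unit_val v i S = (if S = {} then 0 else Max ((v i) ` S))"

definition walrasian_eq ::
  "nat \<Rightarrow> nat \<Rightarrow> (nat \<Rightarrow> nat \<Rightarrow> real) \<Rightarrow> (nat \<Rightarrow> real) \<Rightarrow> (nat \<Rightarrow> nat) \<Rightarrow> bool" where
  "walrasian_eq n m v p a \<longleftrightarrow>
     (\<forall>j<m. 0 \<le> p j) \<and> (\<forall>j<m. a j < n) \<and>
     (\<forall>i<n. \<forall>T. T \<subseteq> {..<m} \<longrightarrow>
        unit_val v i T - sum p T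
          \<le> unit_val v i {j. j < m \<and> a j = i} - sum p {j. j < m \<and> a j = i})"

definition min_walrasian_eq ::
  "nat \<Rightarrow> nat \<Rightarrow> (nat \<Rightarrow> nat \<Rightarrow> real) \<Rightarrow> (nat \<Rightarrow> real) \<Rightarrow> bool" where
  "min_walrasian_eq n m v p \<longleftrightarrow>
     (\<exists>a. walrasian_eq n m v p a) \<and>
     (\<forall>q a'. walrasian_eq n m v q a' \<longrightarrow> (\<forall>j<m. p j \<le> q j))"

(* Sequential first-price auction.  A history is the list of bid profiles of the
   auctions already held (full information); stage k sells item \<sigma> k. *)
type_synonym history = "(nat \<Rightarrow> real) list"

definition bid_profile :: "nat \<Rightarrow> (nat \<Rightarrow> history \<Rightarrow> real) \<Rightarrow> history \<Rightarrow> (nat \<Rightarrow> real)" where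
  "bid_profile n s h = (\<lambda>i. if i < n then s i h else 0)"

fun run :: "nat \<Rightarrow> (nat \<Rightarrow> history \<Rightarrow> real) \<Rightarrow> history \<Rightarrow> nat \<Rightarrow> history" where
  "run n s h 0 = h"
| "run n s h (Suc k) = run n s (h @ [bid_profile n s h]) k"

definition outcome :: "nat \<Rightarrow> nat \<Rightarrow> (nat \<Rightarrow> history \<Rightarrow> real) \<Rightarrow> history \<Rightarrow> history" where
  "outcome n m s h = run n s h (m - length h)"

definition valid_tie :: "nat \<Rightarrow> (history \<Rightarrow> (nat \<Rightarrow> real) \<Rightarrow> nat) \<Rightarrow> bool" where
  "valid_tie n tb \<longleftrightarrow> (\<forall>h b. tb h b < n \<and> (\<forall>i<n. b i \<le> b (tb h b)))"

definition winner :: "(history \<Rightarrow> (nat \<Rightarrow> real) \<Rightarrow> nat) \<Rightarrow> history \<Rightarrow> nat \<Rightarrow> nat" where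
  "winner tb H k = tb (take k H) (H ! k)"

definition payoff ::
  "nat \<Rightarrow> (nat \<Rightarrow> nat \<Rightarrow> real) \<Rightarrow> (nat \<Rightarrow> nat) \<Rightarrow> (history \<Rightarrow> (nat \<Rightarrow> real) \<Rightarrow> nat)
     \<Rightarrow> history \<Rightarrow> nat \<Rightarrow> real" where
  "payoff m v \<sigma> tb H i =
     unit_val v i {\<sigma> k | k. k < m \<and> winner tb H k = i}
     - (\<Sum>k\<in>{k. k < m \<and> winner tb H k = i}. (H ! k) i)"

definition revenue :: "nat \<Rightarrow> (history \<Rightarrow> (nat \<Rightarrow> real) \<Rightarrow> nat) \<Rightarrow> history \<Rightarrow> real" where
  "revenue m tb H = (\<Sum>k<m. (H ! k) (winner tb H k))"

definition valid_history :: "nat \<Rightarrow> nat \<Rightarrow> history \<Rightarrow> bool" where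
  "valid_history n m h \<longleftrightarrow> length h \<le> m \<and>
     (\<forall>b\<in>set h. \<forall>i. (i < n \<longrightarrow> 0 \<le> b i) \<and> (n \<le> i \<longrightarrow> b i = 0))"

definition valid_strategy :: "(history \<Rightarrow> real) \<Rightarrow> bool" where
  "valid_strategy f \<longleftrightarrow> (\<forall>h. 0 \<le> f h)"

definition is_SPE ::
  "nat \<Rightarrow> nat \<Rightarrow> (nat \<Rightarrow> nat \<Rightarrow> real) \<Rightarrow> (nat \<Rightarrow> nat) \<Rightarrow> (history \<Rightarrow> (nat \<Rightarrow> real) \<Rightarrow> nat)
     \<Rightarrow> (nat \<Rightarrow> history \<Rightarrow> real) \<Rightarrow> bool" where
  "is_SPE n m v \<sigma> tb s \<longleftrightarrow>
     (\<forall>i<n. valid_strategy (s i)) \<and>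
     (\<forall>h. valid_history n m h \<longrightarrow>
        (\<forall>i<n. \<forall>f. valid_strategy f \<longrightarrow>
           payoff m v \<sigma> tb (outcome n m (s(i := f)) h) i \<le> payoff m v \<sigma> tb (outcome n m s h) i))"

end

theory Submission imports Defs begin

definition V :: "nat \<Rightarrow> nat \<Rightarrow> real" where
  "V i j = (if i = 0 \<or> Suc j = i then 1 else 0)"

lemma uv_V:
  assumes "finite S"
  shows "unit_val V i S = (if i = 0 then (if S = {} then 0 else 1) else (if i - 1 \<in> S then 1 else 0))"
proof (cases "S = {}")
  case True thus ?thesis by (simp add: unit_val_def)
next
  case False
  show ?thesis
  proof (cases "i = 0 \<or> i - 1 \<in> S")
    case True
    obtain x where x: "x \<in> S" "V i x = 1"
    proof (cases "i = 0")
      case True thus ?thesis using that False by (auto simp: V_def)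
    next
      case F: False
      hence "i - 1 \<in> S" "Suc (i - 1) = i" using True by auto
      thus ?thesis using that by (auto simp: V_def)
    qed
    have x1: "1 \<in> V i ` S" using x by (metis image_eqI)
    have "Max (V i ` S) = 1"
      by (rule Max_eqI) (use assms x1 in \<open>auto simp: V_def\<close>)
    thus ?thesis using True False by (auto simp: unit_val_def)
  next
    case F2: False
    have "V i ` S = {0}" using F2 False by (auto simp: V_def)
    thus ?thesis using F2 False by (auto simp: unit_val_def)
  qed
qed

definition ismax :: "nat \<Rightarrow> (nat \<Rightarrow> real) \<Rightarrow> nat \<Rightarrow> bool" where
  "ismax n b j \<longleftrightarrow> j < n \<and> (\<forall>i<n. b i \<le> b j)"

lemma ex_ismax: "0 < n \<Longrightarrow> \<exists>j. ismax n b j"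
proof -
  assume n: "0 < n"
  have fin: "finite (b ` {..<n})" and ne: "b ` {..<n} \<noteq> {}" using n by auto
  have "Max (b ` {..<n}) \<in> b ` {..<n}" using Max_in[OF fin ne] .
  then obtain j where j: "j < n" "b j = Max (b ` {..<n})" by (metis imageE lessThan_iff)
  have "\<forall>i<n. b i \<le> b j" using j fin by auto
  thus ?thesis using j unfolding ismax_def by blast
qed

definition TB :: "nat \<Rightarrow> history \<Rightarrow> (nat \<Rightarrow> real) \<Rightarrow> nat" where
  "TB n h b = (if length h = 0 \<and> ismax n b 0 then 0
     else if ismax n b (Suc (length h)) then Suc (length h) else (LEAST j. ismax n b j))"

lemma TB_ismax: "0 < n \<Longrightarrow> ismax n b (TB n h b)"
  using LeastI_ex[OF ex_ismax[of n b]] by (auto simp: TB_def)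

lemma valid_TB: "0 < n \<Longrightarrow> valid_tie n (TB n)"
  using TB_ismax unfolding valid_tie_def ismax_def by blast

lemma TB_not0:
  assumes "TB n h b = 0" "length h \<noteq> 0" "Suc (length h) < n" "b (Suc (length h)) = b 0"
  shows False
proof (cases "ismax n b (Suc (length h))")
  case True thus ?thesis using assms by (simp add: TB_def)
next
  case False
  have "ismax n b 0" using TB_ismax[of n b h] assms by simp
  thus ?thesis using False assms by (auto simp: ismax_def)
qed

definition alloc :: "nat \<Rightarrow> history \<Rightarrow> bool" where
  "alloc n h \<longleftrightarrow> (\<exists>k<length h. TB n (take k h) (h ! k) = 0)"

lemma alloc_take: "t \<le> length G \<Longrightarrow> alloc n (take t G) \<longleftrightarrow> (\<exists>k<t. TB n (take k G) (G ! k) = 0)"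
  unfolding alloc_def by (auto simp: min_def)

lemma alloc_mono: assumes "alloc n (take t G)" "t \<le> t'" "t' \<le> length G" shows "alloc n (take t' G)"
proof -
  obtain k where k: "k<t" "TB n (take k G) (G!k) = 0" using alloc_take[of t G n] assms by auto
  have "k < t'" using k assms(2) by simp
  thus ?thesis using alloc_take[of t' G n] assms(3) k(2) by blast
qed

lemma tk_lemma: "take (length h) G = h \<Longrightarrow> k < length h \<Longrightarrow> take k G = take k h \<and> G ! k = h ! k"
  by (metis nth_take order.strict_implies_order min.absorb1 take_take)

definition S :: "nat \<Rightarrow> nat \<Rightarrow> history \<Rightarrow> real" where
  "S n i h = (if alloc n h then 0 else if i = 0 \<or> i = Suc (length h) then 1 else 0)"

lemma run_ext: "\<exists>t. run n s h d = h @ t \<and> length t = d"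
proof (induction d arbitrary: h)
  case 0 thus ?case by simp
next
  case (Suc d)
  obtain t where "run n s (h @ [bid_profile n s h]) d = (h @ [bid_profile n s h]) @ t" "length t = d"
    using Suc by blast
  thus ?case by (intro exI[of _ "bid_profile n s h # t"]) simp
qed

lemma run_nth: "length h \<le> k \<Longrightarrow> k < length h + d \<Longrightarrow>
   run n s h d ! k = bid_profile n s (take k (run n s h d))"
proof (induction d arbitrary: h)
  case 0 thus ?case by simp
next
  case (Suc d)
  show ?case
  proof (cases "k = length h")
    case True
    obtain t where t: "run n s (h @ [bid_profile n s h]) d = (h @ [bid_profile n s h]) @ t"
      using run_ext by blast
    show ?thesis using True t by (simp add: nth_append)
  next
    case False
    thus ?thesis using Suc.IH[of "h @ [bid_profile n s h]"] Suc.prems by simp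
  qed
qed

lemma outcome_props:
  assumes "length h \<le> m"
  shows "length (outcome n m s h) = m" "take (length h) (outcome n m s h) = h"
    "\<And>k. length h \<le> k \<Longrightarrow> k < m \<Longrightarrow> outcome n m s h ! k = bid_profile n s (take k (outcome n m s h))"
proof -
  obtain t where t: "run n s h (m - length h) = h @ t" "length t = m - length h" using run_ext by blast
  show "length (outcome n m s h) = m" "take (length h) (outcome n m s h) = h"
    using t assms by (auto simp: outcome_def)
  fix k assume "length h \<le> k" "k < m"
  thus "outcome n m s h ! k = bid_profile n s (take k (outcome n m s h))"
    using run_nth[of h k "m - length h" n s] assms by (simp add: outcome_def)
qed

lemma pay_split:
  fixes h G :: history and i :: nat
  assumes "length h \<le> m" "length G = m" "take (length h) G = h"
  shows "payoff m V (\<lambda>k. k) tb G i = unit_val V i {k. k<m \<and> winner tb G k = i}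
     - (\<Sum>k\<in>{k. k<length h \<and> tb (take k h) (h!k) = i}. (h!k) i)
     - (\<Sum>k\<in>{k. length h \<le> k \<and> k<m \<and> winner tb G k = i}. (G!k) i)"
proof -
  have tk: "\<And>k. k < length h \<Longrightarrow> take k G = take k h \<and> G ! k = h ! k"
    using tk_lemma[OF assms(3)] by blast
  have eq: "{k. k<m \<and> winner tb G k = i} = {k. k<length h \<and> tb (take k h) (h!k) = i}
       \<union> {k. length h \<le> k \<and> k<m \<and> winner tb G k = i}"
    using tk assms(1) by (auto simp: winner_def)
  have s1: "(\<Sum>k\<in>{k. k<length h \<and> tb (take k h) (h!k) = i}. (G!k) i) =
            (\<Sum>k\<in>{k. k<length h \<and> tb (take k h) (h!k) = i}. (h!k) i)"
    by (rule sum.cong) (auto simp: tk)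
  have "(\<Sum>k\<in>{k. k<m \<and> winner tb G k = i}. (G!k) i) =
     (\<Sum>k\<in>{k. k<length h \<and> tb (take k h) (h!k) = i}. (G!k) i) +
     (\<Sum>k\<in>{k. length h \<le> k \<and> k<m \<and> winner tb G k = i}. (G!k) i)"
    unfolding eq by (rule sum.union_disjoint) auto
  thus ?thesis unfolding payoff_def using s1 by simp
qed


lemma S_bounds: "0 \<le> S n j x" "S n j x \<le> 1" by (auto simp: S_def)

lemma uv_le1: "finite X \<Longrightarrow> unit_val V i X \<le> 1" by (simp add: uv_V)
lemma uv_ge0: "finite X \<Longrightarrow> 0 \<le> unit_val V i X" by (simp add: uv_V)

lemma spe:
  assumes m1: "1 \<le> m"
  shows "is_SPE (Suc m) m V (\<lambda>k. k) (TB (Suc m)) (S (Suc m))"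
  unfolding is_SPE_def
proof (intro conjI allI impI)
  fix i assume "i < Suc m" show "valid_strategy (S (Suc m) i)"
    by (simp add: valid_strategy_def S_bounds)
next
  fix h i f
  assume vh: "valid_history (Suc m) m h" and iN: "i < Suc m" and vf: "valid_strategy f"
  define n where "n = Suc m"
  define s' where "s' = (S n)(i := f)"
  define H where "H = outcome n m (S n) h"
  define H' where "H' = outcome n m s' h"
  define k0 where "k0 = length h"
  have n0: "0 < n" by (simp add: n_def)
  have iN: "i < n" using iN by (simp add: n_def)
  have k0m: "k0 \<le> m" using vh by (simp add: valid_history_def k0_def)
  have lH: "length H = m" and tH: "take k0 H = h"
    using outcome_props[OF k0m[unfolded k0_def]] by (simp_all add: H_def k0_def)
  have lH': "length H' = m" and tH': "take k0 H' = h"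
    using outcome_props[OF k0m[unfolded k0_def]] by (simp_all add: H'_def k0_def)
  have bH: "\<And>k j. k0 \<le> k \<Longrightarrow> k < m \<Longrightarrow> j < n \<Longrightarrow> (H!k) j = S n j (take k H)"
    using outcome_props(3)[OF k0m[unfolded k0_def]] by (simp add: H_def k0_def bid_profile_def)
  have bH': "\<And>k j. k0 \<le> k \<Longrightarrow> k < m \<Longrightarrow> j < n \<Longrightarrow> j \<noteq> i \<Longrightarrow> (H'!k) j = S n j (take k H')"
    using outcome_props(3)[OF k0m[unfolded k0_def]] by (simp add: H'_def k0_def bid_profile_def s'_def)
  have bHi': "\<And>k. k0 \<le> k \<Longrightarrow> k < m \<Longrightarrow> (H'!k) i = f (take k H')"
    using outcome_props(3)[OF k0m[unfolded k0_def]] iN by (simp add: H'_def k0_def bid_profile_def s'_def)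
  have fnn: "\<And>k. k0 \<le> k \<Longrightarrow> k < m \<Longrightarrow> 0 \<le> (H'!k) i"
    using bHi' vf by (simp add: valid_strategy_def)
  have wd: "\<And>G k. winner (TB n) G k = TB n (take k G) (G!k)" by (simp add: winner_def)
  have pastH: "\<And>k. k < k0 \<Longrightarrow> winner (TB n) H k = TB n (take k h) (h!k)"
    using tk_lemma[of h H] tH unfolding wd k0_def by simp
  have pastH': "\<And>k. k < k0 \<Longrightarrow> winner (TB n) H' k = TB n (take k h) (h!k)"
    using tk_lemma[of h H'] tH' unfolding wd k0_def by simp
  have alH: "\<And>t. t \<le> m \<Longrightarrow> alloc n (take t H) \<longleftrightarrow> (\<exists>k<t. winner (TB n) H k = 0)"
    using alloc_take lH wd by simp
  have alH': "\<And>t. t \<le> m \<Longrightarrow> alloc n (take t H') \<longleftrightarrow> (\<exists>k<t. winner (TB n) H' k = 0)"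
    using alloc_take lH' wd by simp
  define WH where "WH = {k. k<m \<and> winner (TB n) H k = i}"
  define WH' where "WH' = {k. k<m \<and> winner (TB n) H' k = i}"
  define Wf where "Wf = {k. k0 \<le> k \<and> k<m \<and> winner (TB n) H k = i}"
  define Wf' where "Wf' = {k. k0 \<le> k \<and> k<m \<and> winner (TB n) H' k = i}"
  define cp where "cp = (\<Sum>k\<in>{k. k<k0 \<and> TB n (take k h) (h!k) = i}. (h!k) i)"
  have finW: "finite WH" "finite WH'" "finite Wf" "finite Wf'"
    by (auto simp: WH_def WH'_def Wf_def Wf'_def)
  have pH: "payoff m V (\<lambda>k. k) (TB n) H i = unit_val V i WH - cp - (\<Sum>k\<in>Wf. (H!k) i)"
    using pay_split[of h m H "TB n" i] k0m lH tH
    unfolding WH_def cp_def Wf_def k0_def by simp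
  have pH': "payoff m V (\<lambda>k. k) (TB n) H' i = unit_val V i WH' - cp - (\<Sum>k\<in>Wf'. (H'!k) i)"
    using pay_split[of h m H' "TB n" i] k0m lH' tH'
    unfolding WH'_def cp_def Wf'_def k0_def by simp
  have sum'nn: "0 \<le> (\<Sum>k\<in>Wf'. (H'!k) i)"
    using fnn unfolding Wf'_def by (intro sum_nonneg) blast
  have uv1': "unit_val V i WH' \<le> 1" using uv_le1 finW by simp
  have caseA: "payoff m V (\<lambda>k. k) (TB n) H' i \<le> payoff m V (\<lambda>k. k) (TB n) H i"
    if "unit_val V i WH = 1" "\<forall>k\<in>Wf. (H!k) i = 0"
    using that pH pH' sum'nn uv1' by simp
  have uvH: "unit_val V i WH = (if i = 0 then (if WH = {} then 0 else 1) else (if i - 1 \<in> WH then 1 else 0))"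
    using uv_V finW by simp
  have uvH': "unit_val V i WH' = (if i = 0 then (if WH' = {} then 0 else 1) else (if i - 1 \<in> WH' then 1 else 0))"
    using uv_V finW by simp
  have goal: "payoff m V (\<lambda>k. k) (TB n) H' i \<le> payoff m V (\<lambda>k. k) (TB n) H i"
  proof (cases "i = 0")
    case i0: True
    show ?thesis
    proof (cases "alloc n h")
      case True
      then obtain k where k: "k < k0" "TB n (take k h) (h!k) = 0" unfolding alloc_def k0_def by blast
      have "k \<in> WH" using k pastH k0m i0 unfolding WH_def by auto
      hence u1: "unit_val V i WH = 1" using uvH i0 by auto
      have "\<forall>k\<in>Wf. (H!k) i = 0"
      proof
        fix k assume "k \<in> Wf"
        hence kk: "k0 \<le> k" "k < m" unfolding Wf_def by auto
        have "alloc n (take k H)" using alloc_mono[of n k0 H k] True tH kk lH by simp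
        thus "(H!k) i = 0" using bH[OF kk] i0 n0 by (simp add: S_def)
      qed
      thus ?thesis using caseA u1 by blast
    next
      case nal: False
      have "{k. k<k0 \<and> TB n (take k h) (h!k) = i} = {}" using nal i0 unfolding alloc_def k0_def by auto
      hence cp0: "cp = 0" unfolding cp_def by (metis sum.empty)
      have np: "\<And>x. x < k0 \<Longrightarrow> winner (TB n) H x \<noteq> 0" using nal pastH unfolding alloc_def k0_def by auto
      have np': "\<And>x. x < k0 \<Longrightarrow> winner (TB n) H' x \<noteq> 0" using nal pastH' unfolding alloc_def k0_def by auto
      have WHf: "WH = Wf" unfolding WH_def Wf_def using i0 np leI by blast
      have WHf': "WH' = Wf'" unfolding WH'_def Wf'_def using i0 np' leI by blast
      have le0: "payoff m V (\<lambda>k. k) (TB n) H' i \<le> 0"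
      proof (cases "Wf' = {}")
        case True thus ?thesis using pH' cp0 WHf' uvH' by simp
      next
        case False
        define t where "t = Min Wf'"
        have tW: "t \<in> Wf'" using Min_in[OF finW(4) False] by (simp add: t_def)
        have tmin: "\<And>k. k \<in> Wf' \<Longrightarrow> t \<le> k" using Min_le[OF finW(4)] by (simp add: t_def)
        have tt: "k0 \<le> t" "t < m" "winner (TB n) H' t = 0" using tW i0 unfolding Wf'_def by auto
        have "\<not> alloc n (take t H')"
        proof
          assume "alloc n (take t H')"
          then obtain k where k: "k < t" "winner (TB n) H' k = 0" using alH' tt by auto
          show False
          proof (cases "k < k0")
            case True thus False using nal k pastH' unfolding alloc_def k0_def by auto
          next
            case False
            hence "k \<in> Wf'" using k tt i0 unfolding Wf'_def by auto
            thus False using tmin k by fastforce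
          qed
        qed
        hence b1: "(H'!t) (Suc t) = 1" using bH'[of t "Suc t"] tt i0 lH' by (simp add: S_def n_def)
        have "ismax n (H'!t) 0" using TB_ismax[OF n0, of "H'!t" "take t H'"] tt wd by simp
        hence "(H'!t) (Suc t) \<le> (H'!t) 0" using tt by (simp add: ismax_def n_def)
        hence ge1: "1 \<le> (H'!t) i" using b1 i0 by simp
        have "(H'!t) i \<le> (\<Sum>k\<in>Wf'. (H'!k) i)"
          by (rule member_le_sum) (use tW fnn finW in \<open>auto simp: Wf'_def\<close>)
        thus ?thesis using pH' cp0 uv1' ge1 by simp
      qed
      have ge0: "0 \<le> payoff m V (\<lambda>k. k) (TB n) H i"
      proof (cases "Wf = {}")
        case True thus ?thesis using pH cp0 WHf uvH by simp
      next
        case False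
        define t where "t = Min Wf"
        have tW: "t \<in> Wf" using Min_in[OF finW(3) False] by (simp add: t_def)
        have tmin: "\<And>k. k \<in> Wf \<Longrightarrow> t \<le> k" using Min_le[OF finW(3)] by (simp add: t_def)
        have tt: "k0 \<le> t" "t < m" "winner (TB n) H t = 0" using tW i0 unfolding Wf_def by auto
        have rest: "(\<Sum>k\<in>Wf - {t}. (H!k) i) = 0"
        proof (rule sum.neutral, rule ballI)
          fix k assume kW: "k \<in> Wf - {t}"
          hence kk: "k0 \<le> k" "k < m" "t < k" using tmin unfolding Wf_def by fastforce+
          have "alloc n (take k H)" using alH[of k] kk tt by auto
          thus "(H!k) i = 0" using bH[of k i] kk iN by (simp add: S_def)
        qed
        have "(\<Sum>k\<in>Wf. (H!k) i) = (H!t) i + (\<Sum>k\<in>Wf - {t}. (H!k) i)"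
          by (rule sum.remove[OF finW(3) tW])
        moreover have "(H!t) i \<le> 1" using bH[of t i] tt iN S_bounds by simp
        moreover have "unit_val V i WH = 1" using uvH i0 WHf False by simp
        ultimately show ?thesis using pH cp0 rest by simp
      qed
      show ?thesis using le0 ge0 by simp
    qed
  next
    case inz: False
    define j where "j = i - 1"
    have ij: "i = Suc j" using inz by (simp add: j_def)
    have jm: "j < m" using iN ij by (simp add: n_def)
    show ?thesis
    proof (cases "j < k0")
      case True
      have z: "\<forall>k\<in>Wf. (H!k) i = 0"
      proof
        fix k assume "k \<in> Wf"
        hence kk: "k0 \<le> k" "k < m" unfolding Wf_def by auto
        thus "(H!k) i = 0" using bH[OF kk iN] True ij lH kk by (simp add: S_def)
      qed
      have "(\<Sum>k\<in>Wf. (H!k) i) = 0" using z by simp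
      moreover have "(j \<in> WH) = (j \<in> WH')" using pastH pastH' True jm unfolding WH_def WH'_def by auto
      ultimately show ?thesis using pH pH' sum'nn uvH uvH' inz j_def by simp
    next
      case jk: False
      show ?thesis
      proof (cases "alloc n (take j H)")
        case True
        have j0: "j \<noteq> 0" using True by (auto simp: alloc_def)
        have bz: "\<And>l. l < n \<Longrightarrow> (H!j) l = 0" using bH[of j] jk jm True by (simp add: S_def)
        have "ismax n (H!j) i" using bz iN by (simp add: ismax_def)
        hence "winner (TB n) H j = i" using j0 jm lH ij by (simp add: wd TB_def)
        hence "j \<in> WH" using jm by (simp add: WH_def)
        hence u1: "unit_val V i WH = 1" using uvH inz j_def by simp
        have "\<forall>k\<in>Wf. (H!k) i = 0"
        proof
          fix k assume "k \<in> Wf"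
          hence kk: "k0 \<le> k" "k < m" unfolding Wf_def by auto
          show "(H!k) i = 0"
          proof (cases "k = j")
            case True thus ?thesis using bz iN by simp
          next
            case False thus ?thesis using bH[OF kk iN] ij kk lH by (simp add: S_def)
          qed
        qed
        thus ?thesis using caseA u1 by blast
      next
        case nal: False
        have nalh: "\<not> alloc n h" using alloc_mono[of n k0 H j] nal tH jk lH jm by fastforce
        have k00: "j = 0" if "k0 = 0"
        proof (rule ccontr)
          assume "j \<noteq> 0"
          have hb0: "\<And>l. l < n \<Longrightarrow> (H!0) l = S n l []" using bH[of 0] that m1 by simp
          have "ismax n (H!0) 0" using hb0 n0 by (auto simp: ismax_def S_def alloc_def)
          hence "winner (TB n) H 0 = 0" by (simp add: wd TB_def)
          hence "alloc n (take j H)" using alH[of j] \<open>j \<noteq> 0\<close> jm by auto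
          thus False using nal by simp
        qed
        have bi: "\<And>k. k \<in> Wf \<Longrightarrow> (H!k) i = (if k = j then 1 else 0)"
        proof -
          fix k assume "k \<in> Wf"
          hence kk: "k0 \<le> k" "k < m" unfolding Wf_def by auto
          show "(H!k) i = (if k = j then 1 else 0)"
          proof (cases "k = j")
            case True thus ?thesis using bH[OF kk iN] nal ij lH jm by (simp add: S_def)
          next
            case False thus ?thesis using bH[OF kk iN] ij kk lH by (simp add: S_def)
          qed
        qed
        have "(\<Sum>k\<in>Wf. (H!k) i) = (\<Sum>k\<in>Wf. if k = j then 1 else 0)"
          by (rule sum.cong) (simp_all add: bi)
        also have "\<dots> = (if j \<in> Wf then 1 else 0)" using finW by simp
        finally have sH: "(\<Sum>k\<in>Wf. (H!k) i) = (if j \<in> Wf then 1 else 0)" .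
        have jW: "(j \<in> WH) = (j \<in> Wf)" using jk unfolding WH_def Wf_def by auto
        have pHv: "payoff m V (\<lambda>k. k) (TB n) H i = - cp" using pH sH jW uvH inz j_def by simp
        have nal': "\<not> alloc n (take (k0 + d) H')" if "k0 + d \<le> j" for d
          using that
        proof (induction d)
          case 0 thus ?case using tH' nalh by simp
        next
          case (Suc d)
          define u where "u = k0 + d"
          have u: "u < j" "k0 \<le> u" using Suc.prems by (auto simp: u_def)
          have na: "\<not> alloc n (take u H')" using Suc u_def by simp
          have "k0 \<noteq> 0" using k00 u by (metis not_less0)
          hence u0: "u \<noteq> 0" using u by simp
          have b0: "(H'!u) 0 = 1" using bH'[of u 0] u jm na inz n0 by (simp add: S_def)
          have b1: "(H'!u) (Suc u) = 1" using bH'[of u "Suc u"] u jm na ij lH' by (simp add: S_def n_def)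
          have "winner (TB n) H' u \<noteq> 0"
          proof
            assume "winner (TB n) H' u = 0"
            hence "TB n (take u H') (H'!u) = 0" by (simp add: wd)
            thus False using TB_not0[of n "take u H'" "H'!u"] u0 u jm lH' b0 b1 by (simp add: n_def)
          qed
          hence "\<not> (\<exists>k<Suc u. winner (TB n) H' k = 0)" using na alH'[of u] u jm
            by (auto simp: less_Suc_eq)
          thus ?case using alH'[of "Suc u"] u jm by (simp add: u_def)
        qed
        have naj: "\<not> alloc n (take j H')" using nal'[of "j - k0"] jk by simp
        have bj0: "(H'!j) 0 = 1" using bH'[of j 0] jk jm naj inz n0 by (simp add: S_def)
        have "payoff m V (\<lambda>k. k) (TB n) H' i \<le> - cp"
        proof (cases "j \<in> Wf'")
          case True
          have "ismax n (H'!j) i" using TB_ismax[OF n0, of "H'!j" "take j H'"] True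
            unfolding Wf'_def by (simp add: wd)
          hence ge1: "1 \<le> (H'!j) i" using bj0 n0 by (auto simp: ismax_def)
          have "(H'!j) i \<le> (\<Sum>k\<in>Wf'. (H'!k) i)"
            by (rule member_le_sum) (use True fnn finW in \<open>auto simp: Wf'_def\<close>)
          thus ?thesis using pH' uv1' ge1 by simp
        next
          case False
          hence "j \<notin> WH'" using jk unfolding WH'_def Wf'_def by auto
          thus ?thesis using pH' sum'nn uvH' inz j_def by simp
        qed
        thus ?thesis using pHv by simp
      qed
    qed
  qed
  thus "payoff m V (\<lambda>k. k) (TB (Suc m)) (outcome (Suc m) m ((S (Suc m))(i := f)) h) i
         \<le> payoff m V (\<lambda>k. k) (TB (Suc m)) (outcome (Suc m) m (S (Suc m)) h) i"
    by (simp add: H_def H'_def s'_def n_def)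
qed


lemma we_ex: "walrasian_eq (Suc m) m V (\<lambda>_. 1) Suc"
  unfolding walrasian_eq_def
proof (intro conjI allI impI)
  fix i T assume iN: "i < Suc m" and T: "T \<subseteq> {..<m}"
  have fT: "finite T" using T finite_subset by blast
  have lhs: "unit_val V i T - sum (\<lambda>_. 1) T \<le> 0"
  proof (cases "T = {}")
    case True thus ?thesis by (simp add: unit_val_def)
  next
    case False
    hence "1 \<le> card T" using fT by (simp add: Suc_le_eq card_gt_0_iff)
    thus ?thesis using uv_le1[OF fT, of i] by simp
  qed
  have rhs: "unit_val V i {j. j < m \<and> Suc j = i} - sum (\<lambda>_. 1) {j. j < m \<and> Suc j = i} = 0"
  proof (cases "i = 0")
    case True
    hence "{j. j < m \<and> Suc j = i} = {}" by auto
    thus ?thesis by (simp add: unit_val_def)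
  next
    case False
    hence "{j. j < m \<and> Suc j = i} = {i - 1}" using iN by auto
    thus ?thesis using False by (simp add: uv_V)
  qed
  show "unit_val V i T - sum (\<lambda>_. 1) T
        \<le> unit_val V i {j. j < m \<and> Suc j = i} - sum (\<lambda>_. 1) {j. j < m \<and> Suc j = i}"
    using lhs rhs by simp
qed auto

lemma we_min_aux:
  assumes we: "walrasian_eq (Suc m) m V q a" and j: "j < m" and qj: "q j < 1"
  shows "a j = Suc j"
proof (rule ccontr)
  assume na: "a j \<noteq> Suc j"
  define B where "B = {k. k < m \<and> a k = Suc j}"
  have fB: "finite B" by (simp add: B_def)
  have all: "\<And>i T. i < Suc m \<Longrightarrow> T \<subseteq> {..<m} \<Longrightarrow> unit_val V i T - sum q T \<le> unit_val V i {j. j<m \<and> a j = i} - sum q {j. j<m \<and> a j = i}"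
    using we unfolding walrasian_eq_def by blast
  have "unit_val V (Suc j) {j} - sum q {j} \<le> unit_val V (Suc j) B - sum q B"
    using all[of "Suc j" "{j}"] j unfolding B_def by simp
  moreover have "unit_val V (Suc j) {j} = 1" by (simp add: uv_V)
  moreover have "unit_val V (Suc j) B = 0" using na fB by (simp add: uv_V B_def)
  moreover have "0 \<le> sum q B" using we by (intro sum_nonneg) (auto simp: B_def walrasian_eq_def)
  ultimately show False using qj by simp
qed

lemma we_min:
  assumes we: "walrasian_eq (Suc m) m V q a" and j: "j < m"
  shows "1 \<le> q j"
proof (rule ccontr)
  assume "\<not> 1 \<le> q j"
  hence qj: "q j < 1" by simp
  define B where "B = {k. k < m \<and> a k = 0}"
  have fB: "finite B" by (simp add: B_def)
  have all: "\<And>i T. i < Suc m \<Longrightarrow> T \<subseteq> {..<m} \<Longrightarrow> unit_val V i T - sum q T \<le> unit_val V i {j. j<m \<and> a j = i} - sum q {j. j<m \<and> a j = i}"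
    using we unfolding walrasian_eq_def by blast
  have ineq: "unit_val V 0 {j} - sum q {j} \<le> unit_val V 0 B - sum q B"
    using all[of 0 "{j}"] j unfolding B_def by simp
  have u1: "unit_val V 0 {j} = 1" by (simp add: uv_V)
  show False
  proof (cases "B = {}")
    case True thus False using ineq u1 qj by (simp add: unit_val_def)
  next
    case False
    then obtain j' where j': "j' \<in> B" by blast
    have "q j' \<le> sum q B" using we j'
      by (intro member_le_sum) (auto simp: B_def walrasian_eq_def fB)
    moreover have "unit_val V 0 B \<le> 1" using uv_le1[OF fB] .
    ultimately have "q j' < 1" using ineq u1 qj by simp
    moreover have "j' < m" using j' by (simp add: B_def)
    ultimately have "a j' = Suc j'" using we_min_aux[OF we] by blast
    thus False using j' by (simp add: B_def)
  qed
qed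

lemma revenue_one:
  assumes m1: "1 \<le> m"
  shows "revenue m (TB (Suc m)) (outcome (Suc m) m (S (Suc m)) []) = 1"
proof -
  define n where "n = Suc m"
  define H where "H = outcome n m (S n) []"
  have lH: "length H = m" using outcome_props(1)[where h="[]" and m=m and n=n and s="S n"] by (simp add: H_def)
  have bH: "\<And>k. k < m \<Longrightarrow> H!k = bid_profile n (S n) (take k H)"
    using outcome_props(3)[where h="[]" and m=m and n=n and s="S n"] by (simp add: H_def)
  have H0: "H!0 = bid_profile n (S n) []" using bH m1 by simp
  have "ismax n (H!0) 0" using H0 by (auto simp: ismax_def bid_profile_def S_def alloc_def n_def)
  hence w0: "winner (TB n) H 0 = 0" by (simp add: winner_def TB_def)
  have r0: "(H!0) (winner (TB n) H 0) = 1" using w0 H0 by (simp add: bid_profile_def S_def alloc_def n_def)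
  have rk: "(H!k) (winner (TB n) H k) = 0" if "0 < k" "k < m" for k
  proof -
    have "alloc n (take k H)" using alloc_take[of k H n] that lH w0 by (auto simp: winner_def)
    thus ?thesis using bH[OF that(2)] by (simp add: bid_profile_def S_def)
  qed
  obtain m' where m': "m = Suc m'" using m1 by (cases m) auto
  have "revenue m (TB n) H = (H!0) (winner (TB n) H 0) + (\<Sum>k<m'. (H!Suc k) (winner (TB n) H (Suc k)))"
    unfolding revenue_def m' by (rule sum.lessThan_Suc_shift)
  also have "\<dots> = 1" using r0 rk m' by simp
  finally show ?thesis by (simp add: H_def n_def)
qed

theorem mainTheorem13:
  fixes m :: nat
  assumes "m \<ge> 1"
  shows "\<exists>v :: nat \<Rightarrow> nat \<Rightarrow> real.
           (\<forall>i j. 0 \<le> v i j) \<and>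
           (\<exists>p. min_walrasian_eq (m + 1) m v p \<and> sum p {..<m} = real m) \<and>
           (\<exists>\<sigma> tb s. bij_betw \<sigma> {..<m} {..<m} \<and> valid_tie (m + 1) tb \<and>
              is_SPE (m + 1) m v \<sigma> tb s \<and>
              revenue m tb (outcome (m + 1) m s []) = 1)"
proof (intro exI conjI)
  show "\<forall>i j. 0 \<le> V i j" by (simp add: V_def)
  show "min_walrasian_eq (m + 1) m V (\<lambda>_. 1)"
    unfolding min_walrasian_eq_def using we_ex[of m] we_min[of m] by auto
  show "sum (\<lambda>_. 1) {..<m} = real m" by simp
  show "bij_betw (\<lambda>k. k) {..<m} {..<m}" by (simp add: bij_betw_def)
  show "valid_tie (m + 1) (TB (Suc m))" using valid_TB[of "Suc m"] by simp
  show "is_SPE (m + 1) m V (\<lambda>k. k) (TB (Suc m)) (S (Suc m))" using spe[OF assms] by simp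
  show "revenue m (TB (Suc m)) (outcome (m + 1) m (S (Suc m)) []) = 1" using revenue_one[OF assms] by simp
qed

end
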